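(* Consider the parametrized system $A\,(c\circ x^B)=0$ with $\ell$ classes as in the context, and assume: (i) $\ker A\cap\mathbb{R}^m_{>0}\neq\emptyset$; (ii) $d=d_1+\cdots+d_\ell$; (iii) for every $j=1,\dots,\ell$: $d_j=\dim P_j\le1$, and if $d_j=1$ then $\sum_{i'=1}^{i}\tilde b^j_{i'}\ge0$ for all $i=1,\dots,\omega_j-1$ (or $\le0$ for all such $i$) and $\tilde b^j_1\cdot\tilde b^j_{\omega_j}<0$. Then $|Y_c|=1$ for all $c\in\mathbb{R}^m_{>0}$.
   Context: Notation: for $x\in\mathbb{R}^n_{>0}$ and $y\in\mathbb{R}^n$, $x^y=\prod_i x_i^{y_i}$; for $B=(b^1,\dots,b^m)$, $x^B$ has entries $x^{b^j}$; $\circ$ is the componentwise product; $(\cdot)^{-1}$ of a positive vector is componentwise; $1_k$ is the all-ones vector in $\mathbb{R}^k$. Setting with classes: $A=(A_1\ \cdots\ A_\ell)\in\mathbb{R}^{l\times m}$ with blocks $A_j\in\mathbb{R}^{l\times m_j}$, $m_1+\cdots+m_\ell=m$, such that $\ker A=\ker A_1\times\cdots\times\ker A_\ell$; correspondingly $B=(B_1\ \cdots\ B_\ell)\in\mathbb{R}^{n\times m}$ with $B_j\in\mathbb{R}^{n\times m_j}$ and $c=(c^1,\dots,c^\ell)$ with $c^j\in\mathbb{R}^{m_j}_{>0}$. For each $j$, $P_j=\{y\in\ker A_j\cap\mathbb{R}^{m_j}_{>0}: 1_{m_j}\cdot y=1\}$ and the coefficient polytope is $P=P_1\times\cdots\times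 P_\ell$. Let $J\in\mathbb{R}^{\ell\times m}$ be block diagonal with diagonal blocks $1_{m_j}^{\mathsf T}$. The monomial dependency subspace is $D=\ker\begin{pmatrix}B\\ J\end{pmatrix}\subseteq\mathbb{R}^m$, $d=\dim D$, and $d_j=\dim\ker\begin{pmatrix}B_j\\ 1_{m_j}^{\mathsf T}\end{pmatrix}$. The solution set on the coefficient polytope is $Y_c=\{y\in P: y^z=c^z\text{ for all }z\in D\}$. For $j$ with $\dim P_j=1$: let $y^{j,1},y^{j,2}$ be the endpoints of the segment $\overline{P_j}=\{y\in\ker A_j\cap\mathbb{R}^{m_j}_{\ge0}:1_{m_j}\cdot y=1\}$, $q^j=(y^{j,1}-y^{j,2})\circ(y^{j,1}+y^{j,2})^{-1}$, indices reordered so that $1=q^j_1\ge\cdots\ge q^j_{m_j}=-1$, and $I^j_1,\dots,I^j_{\omega_j}$ the equivalence classes of equal consecutive components of $q^j$ (in decreasing order of the common value). For $j$ with $d_j=1$: $b^j\in\mathbb{R}^{m_j}$ spans $\ker\begin{pmatrix}B_j\\ 1_{m_j}^{\mathsf T}\end{pmatrix}$ and $\tilde b^j\in\mathbb{R}^{\omega_j}$ has entries $\tilde b^j_i=\sum_{i'\in I^j_i}b^j_{i'}$. *)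

theory Defs
  imports "HOL-Analysis.Analysis"
begin

text \<open>Vectors in R^m are modelled as real^'m; the class of an index i is cl i :: 'k,
  where 'k is the finite type of the l classes. Blocks R^{m_j} are embedded into R^m
  as the vectors supported on class j.\<close>

definition restr :: "('m::finite \<Rightarrow> 'k) \<Rightarrow> 'k \<Rightarrow> real^'m \<Rightarrow> real^'m" where
  "restr cl j y = (\<chi> i. if cl i = j then y $ i else 0)"

definition blockvecs :: "('m::finite \<Rightarrow> 'k) \<Rightarrow> 'k \<Rightarrow> (real^'m) set" where
  "blockvecs cl j = {y. \<forall>i. cl i \<noteq> j \<longrightarrow> y $ i = 0}"

definition Pj :: "real^'m^'l \<Rightarrow> ('m::finite \<Rightarrow> 'k) \<Rightarrow> 'k \<Rightarrow> (real^'m) set" where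
  "Pj A cl j = {y \<in> blockvecs cl j. A *v y = 0 \<and> (\<forall>i. cl i = j \<longrightarrow> 0 < y $ i)
                 \<and> (\<Sum>i\<in>{i. cl i = j}. y $ i) = 1}"

definition Pbar :: "real^'m^'l \<Rightarrow> ('m::finite \<Rightarrow> 'k) \<Rightarrow> 'k \<Rightarrow> (real^'m) set" where
  "Pbar A cl j = {y \<in> blockvecs cl j. A *v y = 0 \<and> (\<forall>i. cl i = j \<longrightarrow> 0 \<le> y $ i)
                 \<and> (\<Sum>i\<in>{i. cl i = j}. y $ i) = 1}"

definition coeff_polytope :: "real^'m^'l \<Rightarrow> ('m::finite \<Rightarrow> 'k) \<Rightarrow> (real^'m) set" where
  "coeff_polytope A cl = {y. \<forall>j. restr cl j y \<in> Pj A cl j}"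

definition Dsp :: "real^'m^'n \<Rightarrow> ('m::finite \<Rightarrow> 'k) \<Rightarrow> (real^'m) set" where
  "Dsp B cl = {z. B *v z = 0 \<and> (\<forall>j. (\<Sum>i\<in>{i. cl i = j}. z $ i) = 0)}"

text \<open>ker (B_j; 1^T) embedded; d_j is its dimension.\<close>
definition Kj :: "real^'m^'n \<Rightarrow> ('m::finite \<Rightarrow> 'k) \<Rightarrow> 'k \<Rightarrow> (real^'m) set" where
  "Kj B cl j = {z \<in> blockvecs cl j. B *v z = 0 \<and> (\<Sum>i\<in>{i. cl i = j}. z $ i) = 0}"

definition monom :: "real^'m \<Rightarrow> real^'m \<Rightarrow> real" where
  "monom x y = (\<Prod>i\<in>UNIV. (x $ i) powr (y $ i))"

definition Ysol :: "real^'m^'l \<Rightarrow> real^'m^'n \<Rightarrow> ('m::finite \<Rightarrow> 'k) \<Rightarrow> real^'m \<Rightarrow> (real^'m) set" where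
  "Ysol A B cl c = {y \<in> coeff_polytope A cl. \<forall>z\<in>Dsp B cl. monom y z = monom c z}"

text \<open>Sign condition of (iii) for class j, given endpoints y1, y2 of the segment and
  a spanning vector b. Indices are 0-based: vs lists the distinct values of q^j in
  decreasing order (so vs!i is the common value on I^j_(i+1)), omega = length vs,
  bt i = tilde b^j_(i+1).\<close>
definition sign_cond :: "('m::finite \<Rightarrow> 'k) \<Rightarrow> 'k \<Rightarrow> real^'m \<Rightarrow> real^'m \<Rightarrow> real^'m \<Rightarrow> bool" where
  "sign_cond cl j y1 y2 b =
    (let q = (\<lambda>k. (y1 $ k - y2 $ k) / (y1 $ k + y2 $ k));
         vs = rev (sorted_list_of_set (q ` {k. cl k = j}));
         \<omega> = length vs;
         bt = (\<lambda>i. \<Sum>k\<in>{k. cl k = j \<and> q k = vs ! i}. b $ k)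
     in ((\<forall>i < \<omega> - 1. 0 \<le> (\<Sum>i'\<le>i. bt i')) \<or> (\<forall>i < \<omega> - 1. (\<Sum>i'\<le>i. bt i') \<le> 0))
        \<and> bt 0 * bt (\<omega> - 1) < 0)"

end

theory Submission
  imports Defs
begin


lemma abel_sum:
  fixes a f :: "nat \<Rightarrow> real"
  shows "(\<Sum>i<Suc m. a i * f i) = (\<Sum>i<m. (\<Sum>i'\<le>i. a i') * (f i - f (Suc i))) + (\<Sum>i'\<le>m. a i') * f m"
  by (induction m) (auto simp: algebra_simps)

lemma h_mono:
  fixes u v w :: real
  assumes "-1 < u" "u < 1" "-1 \<le> w" "w < v" "v \<le> 1"
  shows "w / (1 + u * w) < v / (1 + u * v)"
proof -
  have aw: "\<bar>u * w\<bar> < 1"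
  proof -
    have "\<bar>w\<bar> \<le> 1" using assms by auto
    then have "\<bar>u\<bar> * \<bar>w\<bar> \<le> \<bar>u\<bar>" by (rule mult_left_le) simp
    then show ?thesis using assms by (simp add: abs_mult)
  qed
  have av: "\<bar>u * v\<bar> < 1"
  proof -
    have "\<bar>v\<bar> \<le> 1" using assms by auto
    then have "\<bar>u\<bar> * \<bar>v\<bar> \<le> \<bar>u\<bar>" by (rule mult_left_le) simp
    then show ?thesis using assms by (simp add: abs_mult)
  qed
  have p1: "0 < 1 + u * w" using aw by linarith
  have p2: "0 < 1 + u * v" using av by linarith
  have "w * (1 + u * v) < v * (1 + u * w)" using assms by (simp add: algebra_simps)
  then show ?thesis using p1 p2 by (simp add: divide_simps)
qed

lemma Pj_nonempty:
  fixes A :: "real^'m::finite^'l::finite" and cl :: "'m \<Rightarrow> 'k::finite"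
  assumes surj: "surj cl"
    and ker_decomp: "\<forall>y. A *v y = 0 \<longleftrightarrow> (\<forall>j. A *v restr cl j y = 0)"
    and hyp_i: "\<exists>y. A *v y = 0 \<and> (\<forall>i. 0 < y $ i)"
  shows "Pj A cl j \<noteq> {}"
proof -
  obtain y where y: "A *v y = 0" "\<forall>i. 0 < y $ i" using hyp_i by blast
  obtain i0 where i0: "cl i0 = j" using surj by (metis surjD)
  define s where "s = (\<Sum>i\<in>{i. cl i = j}. y $ i)"
  have "0 < s" unfolding s_def
    proof (rule sum_pos2[where i=i0])
    show "0 \<le> y $ i" if "i \<in> {i. cl i = j}" for i using y(2) by (meson less_imp_le)
  qed (use y(2) i0 in auto)
  define w where "w = (1/s) *\<^sub>R restr cl j y"
  have "w \<in> Pj A cl j"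
    unfolding Pj_def blockvecs_def mem_Collect_eq
  proof (intro conjI)
    show "A *v w = 0" unfolding w_def matrix_vector_mult_scaleR using ker_decomp[rule_format, of y] y by simp
    show "\<forall>i. cl i \<noteq> j \<longrightarrow> w $ i = 0" by (auto simp: w_def restr_def)
    show "\<forall>i. cl i = j \<longrightarrow> 0 < w $ i" using y \<open>0<s\<close> by (auto simp: w_def restr_def)
  next
    have "(\<Sum>i\<in>{i. cl i = j}. w $ i) = (\<Sum>i\<in>{i. cl i = j}. y $ i / s)"
      by (rule sum.cong) (auto simp: w_def restr_def)
    also have "\<dots> = 1" using \<open>0<s\<close> by (simp add: s_def sum_divide_distrib[symmetric])
    finally show "(\<Sum>i\<in>{i. cl i = j}. w $ i) = 1" .
  qed
  then show ?thesis by blast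
qed

lemma endpoint_zero:
  fixes A :: "real^'m::finite^'l::finite" and cl :: "'m \<Rightarrow> 'k::finite"
  assumes seg: "Pbar A cl j = closed_segment y1 y2" and ne: "y1 \<noteq> y2"
  shows "\<exists>k. cl k = j \<and> y2 $ k = 0"
proof (rule ccontr)
  assume H: "\<not> ?thesis"
  have y1: "y1 \<in> Pbar A cl j" and y2: "y2 \<in> Pbar A cl j" using seg by auto
  have pos: "\<forall>k. cl k = j \<longrightarrow> 0 < y2 $ k" using H y2 by (force simp: Pbar_def)
  have ev: "\<forall>\<^sub>F e in at_right (0::real). \<forall>k. cl k = j \<longrightarrow> 0 \<le> y2 $ k + e * (y2 $ k - y1 $ k)"
  proof (rule eventually_all_finite)
    fix k
    show "\<forall>\<^sub>F e in at_right (0::real). cl k = j \<longrightarrow> 0 \<le> y2 $ k + e * (y2 $ k - y1 $ k)"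
    proof (cases "cl k = j")
      case True
      have "((\<lambda>e. y2 $ k + e * (y2 $ k - y1 $ k)) \<longlongrightarrow> y2 $ k + 0 * (y2 $ k - y1 $ k)) (at_right (0::real))"
        by (intro tendsto_intros)
      then have "\<forall>\<^sub>F e in at_right (0::real). 0 < y2 $ k + e * (y2 $ k - y1 $ k)"
        using pos True by (intro order_tendstoD) auto
      then show ?thesis by (auto elim: eventually_mono)
    qed auto
  qed
  then obtain b where b: "b > 0" "\<And>e. e > 0 \<Longrightarrow> e < b \<Longrightarrow> \<forall>k. cl k = j \<longrightarrow> 0 \<le> y2 $ k + e * (y2 $ k - y1 $ k)"
    unfolding eventually_at_right_field by auto
  define e where "e = b/2"
  have e0: "0 < e" "e < b" using b(1) unfolding e_def by simp_all
  have e: "0 < e" "\<forall>k. cl k = j \<longrightarrow> 0 \<le> y2 $ k + e * (y2 $ k - y1 $ k)" using b(2)[OF e0] e0 by blast+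
  define w where "w = (1 + e) *\<^sub>R y2 - e *\<^sub>R y1"
  have "w \<in> Pbar A cl j"
    unfolding Pbar_def blockvecs_def mem_Collect_eq
  proof (intro conjI)
    show "A *v w = 0" using y1 y2
      by (simp add: w_def matrix_vector_mult_diff_distrib matrix_vector_mult_scaleR Pbar_def)
    show "\<forall>i. cl i \<noteq> j \<longrightarrow> w $ i = 0" using y1 y2 by (auto simp: w_def Pbar_def blockvecs_def)
    show "\<forall>i. cl i = j \<longrightarrow> 0 \<le> w $ i"
    proof (intro allI impI)
      fix i assume ci: "cl i = j"
      have "w $ i = y2 $ i + e * (y2 $ i - y1 $ i)" by (simp add: w_def algebra_simps)
      then show "0 \<le> w $ i" using e(2) ci by simp
    qed
  next
    have "(\<Sum>i\<in>{i. cl i = j}. w $ i) = (1+e) * (\<Sum>i\<in>{i. cl i = j}. y2 $ i) - e * (\<Sum>i\<in>{i. cl i = j}. y1 $ i)"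
      by (simp add: w_def sum_subtractf sum_distrib_left)
    then show "(\<Sum>i\<in>{i. cl i = j}. w $ i) = 1" using y1 y2 by (simp add: Pbar_def)
  qed
  then obtain u where u: "0 \<le> u" "u \<le> 1" "w = (1 - u) *\<^sub>R y1 + u *\<^sub>R y2"
    using seg unfolding closed_segment_def by auto
  have "y1 = y2"
  proof (unfold vec_eq_iff, intro allI)
    fix i
    have "(1 + e) * y2 $ i - e * y1 $ i = (1 - u) * y1 $ i + u * y2 $ i"
      using arg_cong[OF u(3), of "\<lambda>v. v $ i"] by (simp add: w_def)
    then have "(1 + e - u) * (y2 $ i - y1 $ i) = 0" by (simp add: algebra_simps)
    moreover have "1 + e - u > 0" using u e by auto
    ultimately show "y1 $ i = y2 $ i" by simp
  qed
  with ne show False by simp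
qed



definition bt_of :: "('m::finite \<Rightarrow> 'k) \<Rightarrow> 'k \<Rightarrow> real^'m \<Rightarrow> real^'m \<Rightarrow> real^'m \<Rightarrow> nat \<Rightarrow> real" where
  "bt_of cl j y1 y2 b i =
    (let q = (\<lambda>k. (y1 $ k - y2 $ k) / (y1 $ k + y2 $ k));
         vs = rev (sorted_list_of_set (q ` {k. cl k = j}))
     in \<Sum>k\<in>{k. cl k = j \<and> q k = vs ! i}. b $ k)"

lemma group_sum:
  fixes q :: "'a \<Rightarrow> real" and g :: "'a \<Rightarrow> real"
  assumes fin: "finite K"
  shows "(\<Sum>k\<in>K. g k * \<phi> (q k)) =
    (\<Sum>i<length (rev (sorted_list_of_set (q ` K))).
        (\<Sum>k\<in>{k\<in>K. q k = rev (sorted_list_of_set (q ` K)) ! i}. g k) * \<phi> (rev (sorted_list_of_set (q ` K)) ! i))"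
proof -
  define vs where "vs = rev (sorted_list_of_set (q ` K))"
  define f where "f = (\<lambda>v. (\<Sum>k\<in>{k\<in>K. q k = v}. g k) * \<phi> v)"
  have setvs: "set vs = q ` K" and dvs: "distinct vs" using fin by (auto simp: vs_def)
  have "(\<Sum>k\<in>K. g k * \<phi> (q k)) = (\<Sum>v\<in>q ` K. \<Sum>k\<in>{x\<in>K. q x = v}. g k * \<phi> (q k))"
    by (rule sum.image_gen[OF fin])
  also have "\<dots> = (\<Sum>v\<in>q ` K. f v)"
    unfolding f_def by (rule sum.cong) (auto simp: sum_distrib_right)
  also have "\<dots> = (\<Sum>v\<in>set vs. f v)" using setvs by simp
  also have "\<dots> = sum_list (map f vs)" by (rule sum_list_distinct_conv_sum_set[OF dvs, symmetric])
  also have "\<dots> = (\<Sum>i<length vs. f (vs ! i))"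
    by (simp add: sum_list_sum_nth atLeast0LessThan)
  finally show ?thesis unfolding vs_def f_def .
qed



lemma Pj_sub_Pbar: "Pj A cl j \<subseteq> Pbar A cl j"
  unfolding Pj_def Pbar_def by (auto simp: le_less)

lemma Pbar_pos_Pj: "y \<in> Pbar A cl j \<Longrightarrow> \<forall>i. cl i = j \<longrightarrow> 0 < y $ i \<Longrightarrow> y \<in> Pj A cl j"
  unfolding Pj_def Pbar_def by auto

lemma q_eq1: "0 < (a::real) + b \<Longrightarrow> (a - b) / (a + b) = 1 \<longleftrightarrow> b = 0"
proof -
  assume s: "0 < a + b"
  have "(a - b) / (a + b) = 1 \<longleftrightarrow> a - b = a + b" using s by (simp add: divide_eq_eq)
  then show ?thesis by linarith
qed

lemma q_eqm1: "0 < (a::real) + b \<Longrightarrow> (a - b) / (a + b) = -1 \<longleftrightarrow> a = 0"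
proof -
  assume s: "0 < a + b"
  have "(a - b) / (a + b) = -1 \<longleftrightarrow> a - b = -(a + b)" using s by (simp add: divide_eq_eq)
  then show ?thesis by linarith
qed

lemma q_range: "0 < (a::real) + b \<Longrightarrow> 0 \<le> a \<Longrightarrow> 0 \<le> b \<Longrightarrow> -1 \<le> (a - b) / (a + b) \<and> (a - b) / (a + b) \<le> 1"
  by (simp add: le_divide_eq divide_le_eq)

lemma qderiv_id:
  fixes a c t :: real
  assumes s: "0 < a + c" and Y: "0 < (1 - t) * a + t * c"
  shows "(c - a) / ((1 - t) * a + t * c) = -2 * (((a - c) / (a + c)) / (1 + (1 - 2*t) * ((a - c) / (a + c))))"
proof -
  define Y where "Y = (1 - t) * a + t * c"
  define s where "s = a + c"
  have s0: "s \<noteq> 0" and Y0: "Y \<noteq> 0" using s Y by (auto simp: s_def Y_def)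
  have e: "1 + (1 - 2*t) * ((a - c) / s) = 2 * Y / s"
    using s by (simp add: field_simps Y_def s_def) 
  have h1: "((a - c) / s) / (1 + (1 - 2*t) * ((a - c) / s)) = (a - c) / (2 * Y)"
    unfolding e using s0 Y0 by (simp add: field_simps)
  have h2: "-2 * ((a - c) / (2 * Y)) = (c - a) / Y" using Y0 by (simp add: field_simps)
  have h3: "(c - a) / Y = -2 * (((a - c) / s) / (1 + (1 - 2*t) * ((a - c) / s)))"
    by (simp only: h1 h2)
  then show ?thesis unfolding Y_def s_def .
qed

lemma ln_split0: "0 < (t::real) \<Longrightarrow> 0 < c \<Longrightarrow> ln ((1 - t) * 0 + t * c) = ln t + ln c"
  by (simp add: ln_mult)

lemma ln_split1: "(t::real) < 1 \<Longrightarrow> 0 < a \<Longrightarrow> ln ((1 - t) * a + t * 0) = ln (1 - t) + ln a"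
  by (simp add: ln_mult)

lemma core':
  fixes A :: "real^'m::finite^'l::finite" and cl :: "'m \<Rightarrow> 'k::finite" and y1 y2 b :: "real^'m" and C :: real
  assumes seg: "Pbar A cl j = closed_segment y1 y2" and ne: "y1 \<noteq> y2" and Pne: "Pj A cl j \<noteq> {}"
    and bsum: "(\<Sum>k\<in>{k. cl k = j}. b $ k) = 0"
    and sc: "sign_cond cl j y1 y2 b"
    and bt0: "0 < bt_of cl j y1 y2 b 0"
  shows "\<exists>!y. y \<in> Pj A cl j \<and> (\<Sum>k\<in>{k. cl k = j}. b $ k * ln (y $ k)) = C"
proof -
  define K where "K = {k. cl k = j}"
  define q where "q = (\<lambda>k. (y1 $ k - y2 $ k) / (y1 $ k + y2 $ k))"
  define vs where "vs = rev (sorted_list_of_set (q ` K))"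
  define n where "n = length vs"
  define bt where "bt = (\<lambda>i. \<Sum>k\<in>{k\<in>K. q k = vs ! i}. b $ k)"
  have finK: "finite K" by simp
  have btK: "bt i = (\<Sum>k\<in>{k. cl k = j \<and> q k = vs ! i}. b $ k)" for i
    unfolding bt_def K_def by simp
  have sc': "((\<forall>i < n - 1. 0 \<le> (\<Sum>i'\<le>i. bt i')) \<or> (\<forall>i < n - 1. (\<Sum>i'\<le>i. bt i') \<le> 0))
        \<and> bt 0 * bt (n - 1) < 0"
    using sc unfolding sign_cond_def Let_def btK n_def vs_def q_def K_def .
  have bt0': "0 < bt 0" using bt0 unfolding bt_of_def Let_def btK vs_def q_def K_def .
  have y1P: "y1 \<in> Pbar A cl j" and y2P: "y2 \<in> Pbar A cl j" using seg by auto
  have y1nn: "\<forall>k\<in>K. 0 \<le> y1 $ k" using y1P by (auto simp: Pbar_def K_def)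
  have y2nn: "\<forall>k\<in>K. 0 \<le> y2 $ k" using y2P by (auto simp: Pbar_def K_def)
  obtain p where p: "p \<in> Pj A cl j" using Pne by auto
  have "p \<in> Pbar A cl j" by (rule subsetD[OF Pj_sub_Pbar p])
  then have "p \<in> closed_segment y1 y2" using seg by simp
  then obtain u where u: "0 \<le> u" "u \<le> 1" "p = (1 - u) *\<^sub>R y1 + u *\<^sub>R y2"
    unfolding closed_segment_def by blast
  have spos: "\<forall>k\<in>K. 0 < y1 $ k + y2 $ k"
  proof
    fix k assume k: "k \<in> K"
    have pk: "0 < p $ k" using p k by (auto simp: Pj_def K_def)
    have pk2: "p $ k = (1 - u) * y1 $ k + u * y2 $ k" using u(3) by simp
    show "0 < y1 $ k + y2 $ k"
    proof (rule ccontr)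
      assume "\<not> 0 < y1 $ k + y2 $ k"
      moreover have "0 \<le> y1 $ k" "0 \<le> y2 $ k" using y1nn y2nn k by auto
      ultimately have "y1 $ k = 0" "y2 $ k = 0" by linarith+
      then show False using pk pk2 by simp
    qed
  qed
  obtain k2 where k2: "k2 \<in> K" "y2 $ k2 = 0" using endpoint_zero[OF seg ne] unfolding K_def by auto
  have seg': "Pbar A cl j = closed_segment y2 y1" using seg closed_segment_commute by metis
  obtain k1 where k1: "k1 \<in> K" "y1 $ k1 = 0" using endpoint_zero[OF seg'] ne unfolding K_def by auto
  have qr: "-1 \<le> q k \<and> q k \<le> 1" if k: "k \<in> K" for k
  proof -
    have s: "0 < y1 $ k + y2 $ k" using spos k by auto
    have a: "0 \<le> y1 $ k" "0 \<le> y2 $ k" using y1nn y2nn k by auto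
    show ?thesis unfolding q_def using q_range[OF s a] .
  qed
  have q1: "q k = 1 \<longleftrightarrow> y2 $ k = 0" if k: "k \<in> K" for k
  proof -
    have s: "0 < y1 $ k + y2 $ k" using spos k by auto
    then show ?thesis unfolding q_def by (rule q_eq1)
  qed
  have qm1: "q k = -1 \<longleftrightarrow> y1 $ k = 0" if k: "k \<in> K" for k
  proof -
    have s: "0 < y1 $ k + y2 $ k" using spos k by auto
    then show ?thesis unfolding q_def by (rule q_eqm1)
  qed
  have setvs: "set vs = q ` K" using finK by (simp add: vs_def)
  have dec: "vs ! i' < vs ! i" if "i < i'" "i' < n" for i i'
  proof -
    define sl where "sl = sorted_list_of_set (q ` K)"
    have ln: "length sl = n" by (simp add: n_def vs_def sl_def)
    have "vs ! i = sl ! (n - Suc i)" "vs ! i' = sl ! (n - Suc i')"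
      using that ln by (auto simp: vs_def sl_def[symmetric] rev_nth)
    moreover have "sl ! (n - Suc i') < sl ! (n - Suc i)"
      using sorted_wrt_nth_less[OF strict_sorted_list_of_set[of "q ` K"], of "n - Suc i'" "n - Suc i"] that ln
      unfolding sl_def by auto
    ultimately show ?thesis by simp
  qed
  have vsin: "vs ! i \<in> q ` K" if "i < n" for i using that setvs n_def nth_mem by metis
  have n2: "2 \<le> n"
  proof (rule ccontr)
    assume "\<not> 2 \<le> n"
    then have "n - 1 = 0" by simp
    then have "bt 0 * bt 0 < 0" using sc' by simp
    then show False by (simp add: not_less)
  qed
  have vs0: "vs ! 0 = 1"
  proof -
    have "1 \<in> set vs" using setvs k2 q1 by (metis image_eqI)
    then obtain i0 where i0: "i0 < n" "vs ! i0 = 1" by (auto simp: in_set_conv_nth n_def)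
    have le: "vs ! 0 \<le> 1" using vsin[of 0] n2 qr by auto
    show ?thesis
    proof (cases "i0 = 0")
      case True then show ?thesis using i0 by simp
    next
      case False
      then have "vs ! i0 < vs ! 0" using dec[of 0 i0] i0 by simp
      then show ?thesis using i0 le by simp
    qed
  qed
  have vsl: "vs ! (n - 1) = -1"
  proof -
    have "-1 \<in> set vs" using setvs k1 qm1 by (metis image_eqI)
    then obtain i0 where i0: "i0 < n" "vs ! i0 = -1" by (auto simp: in_set_conv_nth n_def)
    have le: "-1 \<le> vs ! (n - 1)" using vsin[of "n - 1"] n2 qr by auto
    show ?thesis
    proof (cases "i0 = n - 1")
      case True then show ?thesis using i0 by simp
    next
      case False
      then have "vs ! (n - 1) < vs ! i0" using dec[of i0 "n - 1"] i0 n2 by simp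
      then show ?thesis using i0 le by simp
    qed
  qed
  have beta1: "bt 0 = (\<Sum>k\<in>K. if y2 $ k = 0 then b $ k else 0)"
  proof -
    have "bt 0 = (\<Sum>k\<in>{k\<in>K. y2 $ k = 0}. b $ k)"
      unfolding bt_def vs0 by (rule sum.cong) (use q1 in auto)
    also have "\<dots> = (\<Sum>k\<in>K. if y2 $ k = 0 then b $ k else 0)" by (rule sum.inter_filter[OF finK])
    finally show ?thesis .
  qed
  have beta0: "bt (n - 1) = (\<Sum>k\<in>K. if y1 $ k = 0 then b $ k else 0)"
  proof -
    have "bt (n - 1) = (\<Sum>k\<in>{k\<in>K. y1 $ k = 0}. b $ k)"
      unfolding bt_def vsl by (rule sum.cong) (use qm1 in auto)
    also have "\<dots> = (\<Sum>k\<in>K. if y1 $ k = 0 then b $ k else 0)" by (rule sum.inter_filter[OF finK])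
    finally show ?thesis .
  qed
  have btn: "bt (n - 1) < 0" using sc' bt0' by (simp add: mult_less_0_iff)
  have grp: "(\<Sum>k\<in>K. b $ k * \<phi> (q k)) = (\<Sum>i<n. bt i * \<phi> (vs ! i))" for \<phi>
    using group_sum[OF finK, of "\<lambda>k. b $ k" \<phi> q] unfolding n_def vs_def bt_def by simp
  have tot: "(\<Sum>i<n. bt i) = 0" using grp[of "\<lambda>_. 1"] bsum by (simp add: K_def)
  have Spos: "\<forall>i<n - 1. 0 \<le> (\<Sum>i'\<le>i. bt i')"
  proof -
    have "\<not> (\<forall>i < n - 1. (\<Sum>i'\<le>i. bt i') \<le> 0)"
    proof
      assume H: "\<forall>i < n - 1. (\<Sum>i'\<le>i. bt i') \<le> 0"
      have "0 < n - 1" using n2 by simp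
      then have "(\<Sum>i'\<le>0. bt i') \<le> 0" using H by blast
      then show False using bt0' by simp
    qed
    then show ?thesis using sc' by blast
  qed
  have keypos: "0 < (\<Sum>k\<in>K. b $ k * (q k / (1 + u * q k)))" if u: "-1 < u" "u < 1" for u
  proof -
    define f where "f = (\<lambda>i. vs ! i / (1 + u * vs ! i))"
    define m where "m = n - 1"
    have nm: "n = Suc m" using n2 by (simp add: m_def)
    have fdec: "0 < f i - f (Suc i)" if "Suc i < n" for i
    proof -
      have "vs ! Suc i < vs ! i" using dec[of i "Suc i"] that by simp
      moreover have "-1 \<le> vs ! Suc i" "vs ! i \<le> 1" using vsin[of i] vsin[of "Suc i"] that qr by auto
      ultimately show ?thesis unfolding f_def using h_mono[OF u] by simp
    qed
    have "(\<Sum>k\<in>K. b $ k * (q k / (1 + u * q k))) = (\<Sum>i<Suc m. bt i * f i)"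
      using grp[of "\<lambda>v. v / (1 + u * v)"] by (simp add: f_def nm)
    also have "\<dots> = (\<Sum>i<m. (\<Sum>i'\<le>i. bt i') * (f i - f (Suc i))) + (\<Sum>i'\<le>m. bt i') * f m"
      by (rule abel_sum)
    also have "(\<Sum>i'\<le>m. bt i') = 0" using tot by (simp add: nm lessThan_Suc_atMost[symmetric])
    finally have eq: "(\<Sum>k\<in>K. b $ k * (q k / (1 + u * q k))) = (\<Sum>i<m. (\<Sum>i'\<le>i. bt i') * (f i - f (Suc i)))"
      by simp
    have "0 < (\<Sum>i<m. (\<Sum>i'\<le>i. bt i') * (f i - f (Suc i)))"
    proof (rule sum_pos2[where i=0])
      show "0 \<in> {..<m}" using n2 by (simp add: m_def)
      show "0 < (\<Sum>i'\<le>0. bt i') * (f 0 - f (Suc 0))"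
        using bt0' fdec[of 0] n2 by simp
      show "0 \<le> (\<Sum>i'\<le>i. bt i') * (f i - f (Suc i))" if "i \<in> {..<m}" for i
      proof -
        have i1: "i < n - 1" "Suc i < n" using that by (auto simp: m_def)
        have "0 \<le> (\<Sum>i'\<le>i. bt i')" using Spos i1(1) by blast
        moreover have "0 \<le> f i - f (Suc i)" using fdec[OF i1(2)] by simp
        ultimately show ?thesis by (rule mult_nonneg_nonneg)
      qed
    qed simp
    then show ?thesis using eq by simp
  qed
  define F where "F = (\<lambda>t. \<Sum>k\<in>K. b $ k * ln ((1 - t) * y1 $ k + t * y2 $ k))"
  define F' where "F' = (\<lambda>t. \<Sum>k\<in>K. b $ k * ((y2 $ k - y1 $ k) / ((1 - t) * y1 $ k + t * y2 $ k)))"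
  have Ypos: "0 < (1 - t) * y1 $ k + t * y2 $ k" if "0 < t" "t < 1" "k \<in> K" for t k
  proof (cases "0 < y1 $ k")
    case True
    have "0 < (1 - t) * y1 $ k" using True that by simp
    moreover have "0 \<le> t * y2 $ k" using y2nn that by simp
    ultimately show ?thesis by linarith
  next
    case False
    have "0 \<le> y1 $ k" using y1nn that(3) by blast
    then have z: "y1 $ k = 0" using False by linarith
    have "0 < y1 $ k + y2 $ k" using spos that(3) by blast
    then have "0 < y2 $ k" using z by linarith
    then show ?thesis using that z by simp
  qed
  have Fder: "(F has_real_derivative F' t) (at t)" if "0 < t" "t < 1" for t
    unfolding F_def F'_def
    apply (rule DERIV_sum)
    apply (rule derivative_eq_intros refl | use Ypos that in force)+
    done
  have F'neg: "F' t < 0" if "0 < t" "t < 1" for t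
  proof -
    have "F' t = (\<Sum>k\<in>K. -2 * (b $ k * (q k / (1 + (1 - 2*t) * q k))))"
      unfolding F'_def
    proof (rule sum.cong[OF refl])
      fix k assume k: "k \<in> K"
      have s: "0 < y1 $ k + y2 $ k" using spos k by blast
      show "b $ k * ((y2 $ k - y1 $ k) / ((1 - t) * y1 $ k + t * y2 $ k)) = -2 * (b $ k * (q k / (1 + (1 - 2*t) * q k)))"
      proof -
        have e: "(y2 $ k - y1 $ k) / ((1 - t) * y1 $ k + t * y2 $ k) = -2 * (q k / (1 + (1 - 2*t) * q k))"
          unfolding q_def by (rule qderiv_id[OF s Ypos[OF that k]])
        show ?thesis unfolding e by (rule mult.left_commute)
      qed
    qed
    also have "\<dots> = -2 * (\<Sum>k\<in>K. b $ k * (q k / (1 + (1 - 2*t) * q k)))" by (simp add: sum_distrib_left)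
    also have "\<dots> < 0" using keypos[of "1 - 2*t"] that by simp
    finally show ?thesis .
  qed
  have Fdec: "F t' < F t" if "0 < t" "t < t'" "t' < 1" for t t'
  proof -
    have "\<exists>z>t. z < t' \<and> F t' - F t = (t' - t) * F' z"
      by (rule MVT2) (use that Fder in auto)
    then obtain z where z: "t < z" "z < t'" "F t' - F t = (t' - t) * F' z" by blast
    have "(t' - t) * F' z < 0" using F'neg[of z] z that by (simp add: mult_pos_neg)
    then show ?thesis using z by simp
  qed
  define Y where "Y = (\<lambda>t. (1 - t) *\<^sub>R y1 + t *\<^sub>R y2)"
  have YPj: "Y t \<in> Pj A cl j" if "0 < t" "t < 1" for t
  proof (rule Pbar_pos_Pj)
    have "Y t \<in> closed_segment y1 y2" unfolding Y_def closed_segment_def using that by auto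
    then show "Y t \<in> Pbar A cl j" using seg by simp
    show "\<forall>i. cl i = j \<longrightarrow> 0 < Y t $ i" using Ypos[OF that] by (simp add: Y_def K_def)
  qed
  have YF: "(\<Sum>k\<in>{k. cl k = j}. b $ k * ln (Y t $ k)) = F t" for t by (simp add: Y_def F_def K_def)
  have param: "\<exists>t. 0 < t \<and> t < 1 \<and> y = Y t" if y: "y \<in> Pj A cl j" for y
  proof -
    have "y \<in> Pbar A cl j" by (rule subsetD[OF Pj_sub_Pbar y])
    then have "y \<in> closed_segment y1 y2" using seg by simp
    then obtain t where t: "0 \<le> t" "t \<le> 1" "y = Y t" unfolding closed_segment_def Y_def by blast
    have ypos: "0 < y $ k" if "k \<in> K" for k using y that by (auto simp: Pj_def K_def)
    have "t \<noteq> 0"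
    proof
      assume "t = 0" then have "y = y1" using t by (simp add: Y_def)
      then show False using ypos[OF k1(1)] k1(2) by simp
    qed
    moreover have "t \<noteq> 1"
    proof
      assume "t = 1" then have "y = y2" using t by (simp add: Y_def)
      then show False using ypos[OF k2(1)] k2(2) by simp
    qed
    ultimately show ?thesis using t by (intro exI[of _ t]) auto
  qed
  have uniq: "y = y'" if H: "y \<in> Pj A cl j" "(\<Sum>k\<in>{k. cl k = j}. b $ k * ln (y $ k)) = C"
      "y' \<in> Pj A cl j" "(\<Sum>k\<in>{k. cl k = j}. b $ k * ln (y' $ k)) = C" for y y'
  proof -
    obtain t where t: "0 < t" "t < 1" "y = Y t" using param H(1) by blast
    obtain t' where t': "0 < t'" "t' < 1" "y' = Y t'" using param H(3) by blast
    have Ft: "F t = F t'" using H t t' YF by simp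
    have "t = t'"
    proof (rule ccontr)
      assume "t \<noteq> t'"
      then consider "t < t'" | "t' < t" by linarith
      then show False
      proof cases
        case 1 then show False using Fdec[of t t'] t t' Ft by simp
      next
        case 2 then show False using Fdec[of t' t] t t' Ft by simp
      qed
    qed
    then show ?thesis using t t' by simp
  qed
  define G0 where "G0 = (\<lambda>t. \<Sum>k\<in>K. b $ k * (if y1 $ k = 0 then ln (y2 $ k) else ln ((1 - t) * y1 $ k + t * y2 $ k)))"
  have eq0: "F t = G0 t + bt (n - 1) * ln t" if "0 < t" "t < 1" for t
  proof -
    have "F t = (\<Sum>k\<in>K. b $ k * (if y1 $ k = 0 then ln (y2 $ k) else ln ((1 - t) * y1 $ k + t * y2 $ k))
                   + (if y1 $ k = 0 then b $ k else 0) * ln t)"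
      unfolding F_def
    proof (rule sum.cong[OF refl])
      fix k assume k: "k \<in> K"
      show "b $ k * ln ((1 - t) * y1 $ k + t * y2 $ k) = b $ k * (if y1 $ k = 0 then ln (y2 $ k) else ln ((1 - t) * y1 $ k + t * y2 $ k))
                   + (if y1 $ k = 0 then b $ k else 0) * ln t"
      proof (cases "y1 $ k = 0")
        case True
        have "0 < y1 $ k + y2 $ k" using spos k by blast
        then have "0 < y2 $ k" using True by simp
        then have "ln ((1 - t) * y1 $ k + t * y2 $ k) = ln t + ln (y2 $ k)"
          using ln_split0[OF that(1)] True by simp
        then show ?thesis using True by (simp add: algebra_simps)
      qed simp
    qed
    also have "\<dots> = G0 t + (\<Sum>k\<in>K. if y1 $ k = 0 then b $ k else 0) * ln t"
      by (simp add: G0_def sum.distrib sum_distrib_right)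
    finally show ?thesis using beta0 by simp
  qed
  have G0lim: "(G0 \<longlongrightarrow> G0 0) (at_right 0)"
    unfolding G0_def
  proof (intro tendsto_sum tendsto_mult tendsto_const)
    fix k assume k: "k \<in> K"
    show "((\<lambda>t. if y1 $ k = 0 then ln (y2 $ k) else ln ((1 - t) * y1 $ k + t * y2 $ k)) \<longlongrightarrow>
      (if y1 $ k = 0 then ln (y2 $ k) else ln ((1 - 0) * y1 $ k + 0 * y2 $ k))) (at_right 0)"
    proof (cases "y1 $ k = 0")
      case False
      have "0 \<le> y1 $ k" using y1nn k by blast
      then have "0 < y1 $ k" using False by linarith
      then show ?thesis using False by (auto intro!: tendsto_eq_intros)
    qed simp
  qed
  have lim0: "filterlim F at_top (at_right 0)"
  proof -
    have "filterlim (\<lambda>t. bt (n - 1) * ln t) at_top (at_right 0)"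
      using filterlim_tendsto_neg_mult_at_top_iff[OF tendsto_const btn, of ln "at_right 0"] ln_at_0 by simp
    then have lim: "filterlim (\<lambda>t. G0 t + bt (n - 1) * ln t) at_top (at_right 0)"
      by (rule filterlim_tendsto_add_at_top[OF G0lim])
    have ev: "\<forall>\<^sub>F t in at_right 0. G0 t + bt (n - 1) * ln t = F t"
      unfolding eventually_at_right_field using eq0 by (intro exI[of _ 1]) auto
    show ?thesis using filterlim_cong[OF refl refl ev] lim by simp
  qed
  obtain t0 where t0: "0 < t0" "t0 < 1" "C < F t0"
  proof -
    have "\<forall>\<^sub>F t in at_right 0. C + 1 \<le> F t" using lim0 by (simp add: filterlim_at_top)
    then obtain b0 where b0: "b0 > 0" "\<And>t. 0 < t \<Longrightarrow> t < b0 \<Longrightarrow> C + 1 \<le> F t"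
      unfolding eventually_at_right_field by auto
    define t0 where "t0 = min (b0/2) (1/2)"
    have "0 < t0" "t0 < b0" "t0 < 1" using b0(1) by (auto simp: t0_def)
    then show ?thesis using b0(2)[of t0] that[of t0] by linarith
  qed
  define G1 where "G1 = (\<lambda>t. \<Sum>k\<in>K. b $ k * (if y2 $ k = 0 then ln (y1 $ k) else ln ((1 - t) * y1 $ k + t * y2 $ k)))"
  have eq1: "F t = G1 t + bt 0 * ln (1 - t)" if "0 < t" "t < 1" for t
  proof -
    have "F t = (\<Sum>k\<in>K. b $ k * (if y2 $ k = 0 then ln (y1 $ k) else ln ((1 - t) * y1 $ k + t * y2 $ k))
                   + (if y2 $ k = 0 then b $ k else 0) * ln (1 - t))"
      unfolding F_def
    proof (rule sum.cong[OF refl])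
      fix k assume k: "k \<in> K"
      show "b $ k * ln ((1 - t) * y1 $ k + t * y2 $ k) = b $ k * (if y2 $ k = 0 then ln (y1 $ k) else ln ((1 - t) * y1 $ k + t * y2 $ k))
                   + (if y2 $ k = 0 then b $ k else 0) * ln (1 - t)"
      proof (cases "y2 $ k = 0")
        case True
        have "0 < y1 $ k + y2 $ k" using spos k by blast
        then have "0 < y1 $ k" using True by simp
        then have "ln ((1 - t) * y1 $ k + t * y2 $ k) = ln (1 - t) + ln (y1 $ k)"
          using ln_split1[OF that(2)] True by simp
        then show ?thesis using True by (simp add: algebra_simps)
      qed simp
    qed
    also have "\<dots> = G1 t + (\<Sum>k\<in>K. if y2 $ k = 0 then b $ k else 0) * ln (1 - t)"
      by (simp add: G1_def sum.distrib sum_distrib_right)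
    finally show ?thesis using beta1 by simp
  qed
  have G1lim: "(G1 \<longlongrightarrow> G1 1) (at_left 1)"
    unfolding G1_def
  proof (intro tendsto_sum tendsto_mult tendsto_const)
    fix k assume k: "k \<in> K"
    show "((\<lambda>t. if y2 $ k = 0 then ln (y1 $ k) else ln ((1 - t) * y1 $ k + t * y2 $ k)) \<longlongrightarrow>
      (if y2 $ k = 0 then ln (y1 $ k) else ln ((1 - 1) * y1 $ k + 1 * y2 $ k))) (at_left 1)"
    proof (cases "y2 $ k = 0")
      case False
      have "0 \<le> y2 $ k" using y2nn k by blast
      then have "0 < y2 $ k" using False by linarith
      then show ?thesis using False by (auto intro!: tendsto_eq_intros)
    qed simp
  qed
  have lnl: "filterlim (\<lambda>t. ln (1 - t)) at_bot (at_left (1::real))"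
  proof -
    have t1: "((\<lambda>t. 1 - t) \<longlongrightarrow> (0::real)) (at_left 1)" by (auto intro!: tendsto_eq_intros)
    have e1: "\<forall>\<^sub>F t in at_left (1::real). 0 < 1 - t"
      unfolding eventually_at_left_field by (intro exI[of _ 0]) auto
    have "filterlim (\<lambda>t. 1 - t) (at_right 0) (at_left (1::real))"
      by (rule tendsto_imp_filterlim_at_right[OF t1 e1])
    then show ?thesis by (rule filterlim_compose[OF ln_at_0])
  qed
  have lim1: "filterlim F at_bot (at_left 1)"
  proof -
    have "filterlim (\<lambda>t. bt 0 * ln (1 - t)) at_bot (at_left 1)"
      by (rule filterlim_tendsto_pos_mult_at_bot[OF tendsto_const bt0' lnl])
    then have lim: "filterlim (\<lambda>t. G1 t + bt 0 * ln (1 - t)) at_bot (at_left 1)"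
      using filterlim_tendsto_add_at_bot_iff[OF G1lim] by simp
    have ev: "\<forall>\<^sub>F t in at_left 1. G1 t + bt 0 * ln (1 - t) = F t"
      unfolding eventually_at_left_field using eq1 by (intro exI[of _ 0]) auto
    show ?thesis using filterlim_cong[OF refl refl ev] lim by simp
  qed
  obtain t1 where t1: "0 < t1" "t1 < 1" "F t1 < C"
  proof -
    have "\<forall>\<^sub>F t in at_left 1. F t \<le> C - 1" using lim1 by (simp add: filterlim_at_bot)
    then obtain b1 where b1: "b1 < 1" "\<And>t. b1 < t \<Longrightarrow> t < 1 \<Longrightarrow> F t \<le> C - 1"
      unfolding eventually_at_left_field by auto
    define t1 where "t1 = (max b1 0 + 1) / 2"
    have "0 < t1" "b1 < t1" "t1 < 1" using b1(1) by (auto simp: t1_def)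
    then show ?thesis using b1(2)[of t1] that[of t1] by linarith
  qed
  have cont: "continuous_on {a..b} F" if "0 < a" "b < 1" for a b
    by (rule continuous_at_imp_continuous_on) (use DERIV_isCont[OF Fder] that in force)
  obtain t where t: "0 < t" "t < 1" "F t = C"
  proof (cases "t0 \<le> t1")
    case True
    have "\<exists>x\<ge>t0. x \<le> t1 \<and> F x = C"
      by (rule IVT2') (use t0 t1 True cont in auto)
    then obtain x where x: "t0 \<le> x" "x \<le> t1" "F x = C" by blast
    have "0 < x" "x < 1" using x t0 t1 by linarith+
    then show ?thesis using that x(3) by blast
  next
    case False
    have "\<exists>x\<ge>t1. x \<le> t0 \<and> F x = C"
      by (rule IVT') (use t0 t1 False cont in auto)
    then obtain x where x: "t1 \<le> x" "x \<le> t0" "F x = C" by blast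
    have "0 < x" "x < 1" using x t0 t1 by linarith+
    then show ?thesis using that x(3) by blast
  qed
  show ?thesis
  proof (rule ex1I[of _ "Y t"])
    show "Y t \<in> Pj A cl j \<and> (\<Sum>k\<in>{k. cl k = j}. b $ k * ln (Y t $ k)) = C"
      using YPj[OF t(1,2)] YF t by simp
    show "y = Y t" if "y \<in> Pj A cl j \<and> (\<Sum>k\<in>{k. cl k = j}. b $ k * ln (y $ k)) = C" for y
      using uniq[of y "Y t"] that YPj[OF t(1,2)] YF t by simp
  qed
qed



lemma linear_restr: "linear (restr cl j)"
  unfolding linear_iff restr_def by (auto simp: vec_eq_iff)

lemma restr_other: "y \<in> blockvecs cl i \<Longrightarrow> i \<noteq> j \<Longrightarrow> restr cl j y = 0"
  unfolding restr_def blockvecs_def by (auto simp: vec_eq_iff)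

lemma restr_same: "y \<in> blockvecs cl j \<Longrightarrow> restr cl j y = y"
  unfolding restr_def blockvecs_def by (auto simp: vec_eq_iff)

lemma indep_blocks:
  fixes bs :: "'k \<Rightarrow> real^'m::finite" and cl :: "'m \<Rightarrow> 'k"
  assumes bl: "\<And>j. j \<in> J \<Longrightarrow> bs j \<in> blockvecs cl j" and nz: "\<And>j. j \<in> J \<Longrightarrow> bs j \<noteq> 0"
  shows "independent (bs ` J)" "inj_on bs J"
proof -
  show "inj_on bs J"
  proof (rule inj_onI)
    fix i j assume ij: "i \<in> J" "j \<in> J" "bs i = bs j"
    show "i = j"
    proof (rule ccontr)
      assume "i \<noteq> j"
      then have "restr cl j (bs i) = 0" by (rule restr_other[OF bl[OF ij(1)]])
      moreover have "restr cl j (bs j) = bs j" by (rule restr_same[OF bl[OF ij(2)]])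
      ultimately show False using nz ij by simp
    qed
  qed
  show "independent (bs ` J)"
    unfolding dependent_def
  proof
    assume "\<exists>a\<in>bs ` J. a \<in> span (bs ` J - {a})"
    then obtain j where j: "j \<in> J" "bs j \<in> span (bs ` J - {bs j})" by blast
    have "restr cl j (bs j) \<in> restr cl j ` span (bs ` J - {bs j})" using j(2) by blast
    also have "\<dots> = span (restr cl j ` (bs ` J - {bs j}))" by (rule span_linear_image[OF linear_restr, symmetric])
    also have "\<dots> \<subseteq> span {0}"
    proof (rule span_mono)
      show "restr cl j ` (bs ` J - {bs j}) \<subseteq> {0}"
      proof
        fix x assume "x \<in> restr cl j ` (bs ` J - {bs j})"
        then obtain i where i: "i \<in> J" "bs i \<noteq> bs j" "x = restr cl j (bs i)" by blast
        then have "i \<noteq> j" by auto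
        then show "x \<in> {0}" using restr_other[OF bl[OF i(1)]] i(3) by simp
      qed
    qed
    finally have "restr cl j (bs j) \<in> span {0}" .
    then have "bs j \<in> span {0}" using restr_same[OF bl[OF j(1)]] by simp
    then have "bs j = 0" by (simp add: span_insert_0 span_empty)
    then show False using nz j(1) by simp
  qed
qed

lemma Pbar_convex:
  fixes A :: "real^'m::finite^'l::finite" and cl :: "'m \<Rightarrow> 'k"
  shows "convex (Pbar A cl j)"
proof (rule convexI)
  fix x y :: "real^'m" and u v :: real
  assume x: "x \<in> Pbar A cl j" and y: "y \<in> Pbar A cl j" and uv0: "0 \<le> u" "0 \<le> v" "u + v = 1"
  have uv: "0 \<le> u \<and> 0 \<le> v \<and> u + v = 1" using uv0 by simp
  show "u *\<^sub>R x + v *\<^sub>R y \<in> Pbar A cl j"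
    unfolding Pbar_def blockvecs_def mem_Collect_eq
  proof (intro conjI)
    show "\<forall>i. cl i \<noteq> j \<longrightarrow> (u *\<^sub>R x + v *\<^sub>R y) $ i = 0"
    proof (intro allI impI)
      fix i assume ci: "cl i \<noteq> j"
      have "x $ i = 0" "y $ i = 0" using x y ci unfolding Pbar_def blockvecs_def by blast+
      then show "(u *\<^sub>R x + v *\<^sub>R y) $ i = 0" by simp
    qed
    show "A *v (u *\<^sub>R x + v *\<^sub>R y) = 0"
    proof -
      have "A *v x = 0" "A *v y = 0" using x y unfolding Pbar_def by blast+
      then show ?thesis by (simp add: matrix_vector_right_distrib matrix_vector_mult_scaleR)
    qed
    show "\<forall>i. cl i = j \<longrightarrow> 0 \<le> (u *\<^sub>R x + v *\<^sub>R y) $ i"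
    proof (intro allI impI)
      fix i assume ci: "cl i = j"
      have "0 \<le> x $ i" "0 \<le> y $ i" using x y ci unfolding Pbar_def by blast+
      then have "0 \<le> u * x $ i + v * y $ i" using uv0 by (intro add_nonneg_nonneg mult_nonneg_nonneg)
      then show "0 \<le> (u *\<^sub>R x + v *\<^sub>R y) $ i" by simp
    qed
    have "(\<Sum>i\<in>{i. cl i = j}. (u *\<^sub>R x + v *\<^sub>R y) $ i) = u * (\<Sum>i\<in>{i. cl i = j}. x $ i) + v * (\<Sum>i\<in>{i. cl i = j}. y $ i)"
      by (simp add: sum.distrib sum_distrib_left)
    moreover have "(\<Sum>i\<in>{i. cl i = j}. x $ i) = 1" "(\<Sum>i\<in>{i. cl i = j}. y $ i) = 1"
      using x y unfolding Pbar_def by blast+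
    ultimately show "(\<Sum>i\<in>{i. cl i = j}. (u *\<^sub>R x + v *\<^sub>R y) $ i) = 1"
      using uv0 by simp
  qed
qed

lemma Pbar_closed:
  fixes A :: "real^'m::finite^'l::finite" and cl :: "'m \<Rightarrow> 'k"
  shows "closed (Pbar A cl j)"
proof -
  have c1: "closed {y::real^'m. \<forall>i. cl i \<noteq> j \<longrightarrow> y $ i = 0}"
    by (intro closed_Collect_all closed_Collect_imp open_Collect_const closed_Collect_eq
        continuous_on_component continuous_on_id continuous_on_const)
  have c2: "closed {y::real^'m. A *v y = 0}"
    by (intro closed_Collect_eq matrix_vector_mult_linear_continuous_on continuous_on_const)
  have c3: "closed {y::real^'m. \<forall>i. cl i = j \<longrightarrow> 0 \<le> y $ i}"
    by (intro closed_Collect_all closed_Collect_imp open_Collect_const closed_Collect_le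
        continuous_on_component continuous_on_id continuous_on_const)
  have c4: "closed {y::real^'m. (\<Sum>i\<in>{i. cl i = j}. y $ i) = 1}"
    by (intro closed_Collect_eq continuous_on_sum continuous_on_component continuous_on_id continuous_on_const)
  have "Pbar A cl j = {y::real^'m. \<forall>i. cl i \<noteq> j \<longrightarrow> y $ i = 0} \<inter> {y. A *v y = 0}
      \<inter> {y. \<forall>i. cl i = j \<longrightarrow> 0 \<le> y $ i} \<inter> {y. (\<Sum>i\<in>{i. cl i = j}. y $ i) = 1}"
    unfolding Pbar_def blockvecs_def by blast
  then show ?thesis using c1 c2 c3 c4 by (simp add: closed_Int)
qed

lemma Pbar_compact:
  fixes A :: "real^'m::finite^'l::finite" and cl :: "'m \<Rightarrow> 'k"
  shows "compact (Pbar A cl j)"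
  unfolding compact_eq_bounded_closed
proof
  show "bounded (Pbar A cl j)"
    unfolding bounded_iff
  proof (intro exI ballI)
    fix y assume y: "y \<in> Pbar A cl j"
    have nn: "\<forall>k. cl k = j \<longrightarrow> 0 \<le> y $ k" using y unfolding Pbar_def mem_Collect_eq by blast
    have s1: "(\<Sum>k\<in>{k. cl k = j}. y $ k) = 1" using y unfolding Pbar_def mem_Collect_eq by blast
    have z: "\<forall>k. cl k \<noteq> j \<longrightarrow> y $ k = 0" using y unfolding Pbar_def blockvecs_def mem_Collect_eq by blast
    have le1: "\<bar>y $ i\<bar> \<le> 1" for i
    proof (cases "cl i = j")
      case True
      have "y $ i \<le> (\<Sum>k\<in>{k. cl k = j}. y $ k)"
        by (rule member_le_sum) (use True nn in auto)
      moreover have "0 \<le> y $ i" using nn True by blast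
      ultimately show ?thesis using s1 by linarith
    next
      case False then have "y $ i = 0" using z by blast
      then show ?thesis by simp
    qed
    have "norm y \<le> (\<Sum>i\<in>UNIV. \<bar>y $ i\<bar>)" by (rule norm_le_l1_cart)
    also have "\<dots> \<le> (\<Sum>i\<in>(UNIV::'m set). 1)" by (rule sum_mono) (rule le1)
    finally show "norm y \<le> real CARD('m)" by simp
  qed
  show "closed (Pbar A cl j)" by (rule Pbar_closed)
qed

lemma Pbar_aff:
  fixes A :: "real^'m::finite^'l::finite" and cl :: "'m \<Rightarrow> 'k"
  assumes ne: "Pj A cl j \<noteq> {}"
  shows "Pbar A cl j \<subseteq> affine hull (Pj A cl j)"
proof
  fix x assume x: "x \<in> Pbar A cl j"
  obtain p where p: "p \<in> Pj A cl j" using ne by auto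
  have pb: "p \<in> Pbar A cl j" by (rule subsetD[OF Pj_sub_Pbar p])
  define m where "m = (1/2) *\<^sub>R x + (1/2) *\<^sub>R p"
  have "m \<in> Pbar A cl j" unfolding m_def
    by (rule convexD[OF Pbar_convex x pb]) simp_all
  moreover have "\<forall>i. cl i = j \<longrightarrow> 0 < m $ i"
  proof (intro allI impI)
    fix i assume "cl i = j"
    then have "0 \<le> x $ i" "0 < p $ i" using x p by (auto simp: Pbar_def Pj_def)
    then show "0 < m $ i" by (simp add: m_def)
  qed
  ultimately have mP: "m \<in> Pj A cl j" by (rule Pbar_pos_Pj)
  have "x = 2 *\<^sub>R m + (-1) *\<^sub>R p" by (simp add: m_def vec_eq_iff)
  also have "\<dots> \<in> affine hull (Pj A cl j)"
    by (rule mem_affine[OF affine_affine_hull]) (auto intro!: hull_inc simp: mP p)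
  finally show "x \<in> affine hull (Pj A cl j)" .
qed



lemma core:
  fixes A :: "real^'m::finite^'l::finite" and B :: "real^'m^'n::finite" and cl :: "'m \<Rightarrow> 'k::finite"
  assumes seg: "Pbar A cl j = closed_segment y1 y2" and ne: "y1 \<noteq> y2" and Pne: "Pj A cl j \<noteq> {}"
    and bK: "b \<in> Kj B cl j" and sc1: "sign_cond cl j y1 y2 b" and sc2: "sign_cond cl j y1 y2 (-b)"
  shows "\<exists>!y. y \<in> Pj A cl j \<and> (\<Sum>k\<in>{k. cl k = j}. b $ k * ln (y $ k)) = C"
proof -
  have bsum: "(\<Sum>k\<in>{k. cl k = j}. b $ k) = 0" using bK unfolding Kj_def by blast
  have bsum': "(\<Sum>k\<in>{k. cl k = j}. (-b) $ k) = 0" using bsum by (simp add: sum_negf)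
  have neg: "bt_of cl j y1 y2 (-b) i = - bt_of cl j y1 y2 b i" for i
    by (simp add: bt_of_def Let_def sum_negf)
  have "\<exists>i. bt_of cl j y1 y2 b 0 * bt_of cl j y1 y2 b i < 0"
    using sc1 unfolding sign_cond_def bt_of_def Let_def by blast
  then have nz: "bt_of cl j y1 y2 b 0 \<noteq> 0" by auto
  show ?thesis
  proof (cases "0 < bt_of cl j y1 y2 b 0")
    case True then show ?thesis by (rule core'[OF seg ne Pne bsum sc1])
  next
    case False
    then have "0 < bt_of cl j y1 y2 (-b) 0" using nz neg[of 0] by simp
    then have ex: "\<exists>!y. y \<in> Pj A cl j \<and> (\<Sum>k\<in>{k. cl k = j}. (-b) $ k * ln (y $ k)) = -C"
      by (rule core'[OF seg ne Pne bsum' sc2])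
    have eq: "(\<Sum>k\<in>{k. cl k = j}. (-b) $ k * ln (y $ k)) = -C \<longleftrightarrow> (\<Sum>k\<in>{k. cl k = j}. b $ k * ln (y $ k)) = C"
      for y :: "real^'m"
      by (simp add: sum_negf)
    show ?thesis using ex unfolding eq .
  qed
qed



theorem theorem4:
  fixes A :: "real^'m::finite^'l::finite" and B :: "real^'m^'n::finite"
    and cl :: "'m \<Rightarrow> 'k::finite"
  assumes classes_nonempty: "surj cl"
    and ker_decomp: "\<forall>y. A *v y = 0 \<longleftrightarrow> (\<forall>j. A *v restr cl j y = 0)"
    and hyp_i: "\<exists>y. A *v y = 0 \<and> (\<forall>i. 0 < y $ i)"
    and hyp_ii: "dim (Dsp B cl) = (\<Sum>j\<in>UNIV. dim (Kj B cl j))"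
    and hyp_iii: "\<forall>j. int (dim (Kj B cl j)) = aff_dim (Pj A cl j) \<and> aff_dim (Pj A cl j) \<le> 1 \<and>
        (dim (Kj B cl j) = 1 \<longrightarrow>
          (\<forall>y1 y2 b. y1 \<noteq> y2 \<and> Pbar A cl j = closed_segment y1 y2 \<and> span {b} = Kj B cl j
                      \<longrightarrow> sign_cond cl j y1 y2 b))"
  shows "\<forall>c. (\<forall>i. 0 < c $ i) \<longrightarrow> card (Ysol A B cl c) = 1"
proof (intro allI impI)
  fix c :: "real^'m" assume cpos: "\<forall>i. 0 < c $ i"
  define L where "L = (\<lambda>(y::real^'m) (z::real^'m). \<Sum>i\<in>UNIV. z $ i * ln (y $ i))"
  have monomL: "monom y z = exp (L y z)" if "\<forall>i. 0 < y $ i" for y z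
  proof -
    have "monom y z = (\<Prod>i\<in>UNIV. exp (z $ i * ln (y $ i)))"
      unfolding monom_def
    proof (rule prod.cong[OF refl])
      fix i
      have "y $ i \<noteq> 0" using that by (metis less_irrefl)
      then show "y $ i powr z $ i = exp (z $ i * ln (y $ i))" by (simp add: powr_def)
    qed
    also have "\<dots> = exp (L y z)" by (simp add: L_def exp_sum)
    finally show ?thesis .
  qed
  have monom_iff: "monom y z = monom c z \<longleftrightarrow> L y z = L c z" if "\<forall>i. 0 < y $ i" for y z
    using monomL[OF that] monomL[OF cpos] by simp
  have Lblock: "L y b = (\<Sum>k\<in>{k. cl k = j}. b $ k * ln (y $ k))" if "b \<in> blockvecs cl j" for y b j
  proof -
    have z: "\<forall>i. cl i \<noteq> j \<longrightarrow> b $ i = 0" using that unfolding blockvecs_def by blast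
    have "L y b = (\<Sum>k\<in>UNIV. b $ k * ln (y $ k))" by (simp add: L_def)
    also have "\<dots> = (\<Sum>k\<in>{k. cl k = j}. b $ k * ln (y $ k))"
      by (rule sum.mono_neutral_right) (use z in auto)
    finally show ?thesis .
  qed
  have blockagree: "(\<Sum>k\<in>{k. cl k = j}. b $ k * ln (y $ k)) = (\<Sum>k\<in>{k. cl k = j}. b $ k * ln (y' $ k))"
    if "\<forall>k. cl k = j \<longrightarrow> y $ k = y' $ k" for b y y' j
    by (rule sum.cong) (use that in auto)
  have Pne: "Pj A cl j \<noteq> {}" for j by (rule Pj_nonempty[OF classes_nonempty ker_decomp hyp_i])
  have hj: "int (dim (Kj B cl j)) = aff_dim (Pj A cl j)" "aff_dim (Pj A cl j) \<le> 1" for j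
    using hyp_iii by blast+
  have dimle: "dim (Kj B cl j) \<le> 1" for j
    using hj[of j] by linarith
  have subK: "subspace (Kj B cl j)" for j
  proof -
    have "0 \<in> Kj B cl j" by (simp add: Kj_def blockvecs_def)
    moreover have "x + y \<in> Kj B cl j" if "x \<in> Kj B cl j" "y \<in> Kj B cl j" for x y
      using that by (simp add: Kj_def blockvecs_def matrix_vector_right_distrib sum.distrib)
    moreover have "a *\<^sub>R x \<in> Kj B cl j" if "x \<in> Kj B cl j" for a x
      using that by (simp add: Kj_def blockvecs_def matrix_vector_mult_scaleR sum_distrib_left[symmetric])
    ultimately show ?thesis unfolding subspace_def by blast
  qed
  have KD: "Kj B cl j \<subseteq> Dsp B cl" for j
  proof
    fix z assume z: "z \<in> Kj B cl j"
    have Bz: "B *v z = 0" and zs: "(\<Sum>i\<in>{i. cl i = j}. z $ i) = 0" and zb: "\<forall>i. cl i \<noteq> j \<longrightarrow> z $ i = 0"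
      using z unfolding Kj_def blockvecs_def mem_Collect_eq by blast+
    have "(\<Sum>i\<in>{i. cl i = j'}. z $ i) = 0" for j'
    proof (cases "j' = j")
      case True then show ?thesis using zs by simp
    next
      case False then show ?thesis using zb by (intro sum.neutral) auto
    qed
    then show "z \<in> Dsp B cl" unfolding Dsp_def using Bz by blast
  qed
  have exb: "\<exists>bj. dim (Kj B cl j) = 1 \<longrightarrow> bj \<noteq> 0 \<and> span {bj} = Kj B cl j" for j
  proof (cases "dim (Kj B cl j) = 1")
    case True
    obtain Bs where Bs: "Bs \<subseteq> Kj B cl j" "independent Bs" "Kj B cl j \<subseteq> span Bs" "card Bs = dim (Kj B cl j)"
      by (rule basis_exists)
    then have "card Bs = 1" using True by simp
    then obtain bj where bj: "Bs = {bj}" by (rule card_1_singletonE)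
    have nz: "bj \<noteq> 0" using Bs(2) bj by (simp add: dependent_single)
    have "span {bj} = Kj B cl j"
    proof
      show "span {bj} \<subseteq> Kj B cl j" by (rule span_minimal[OF _ subK]) (use Bs(1) bj in simp)
      show "Kj B cl j \<subseteq> span {bj}" using Bs(3) bj by simp
    qed
    then show ?thesis using nz by blast
  next
    case False then show ?thesis by blast
  qed
  have "\<forall>j. \<exists>bj. dim (Kj B cl j) = 1 \<longrightarrow> bj \<noteq> 0 \<and> span {bj} = Kj B cl j" using exb by blast
  then have "\<exists>f. \<forall>j. dim (Kj B cl j) = 1 \<longrightarrow> f j \<noteq> 0 \<and> span {f j} = Kj B cl j" by (rule choice)
  then obtain bsel where bsel0: "\<forall>j. dim (Kj B cl j) = 1 \<longrightarrow> bsel j \<noteq> 0 \<and> span {bsel j} = Kj B cl j"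
    by blast
  have bsel: "bsel j \<noteq> 0" "span {bsel j} = Kj B cl j" if "dim (Kj B cl j) = 1" for j
    using bsel0 that by blast+
  have bselK: "bsel j \<in> Kj B cl j" if d1: "dim (Kj B cl j) = 1" for j
  proof -
    have "bsel j \<in> span {bsel j}" by (rule span_base) simp
    then show ?thesis using bsel(2)[OF d1] by simp
  qed
  have bselB: "bsel j \<in> blockvecs cl j" if "dim (Kj B cl j) = 1" for j
    using bselK[OF that] unfolding Kj_def by blast
  have uniqj: "\<exists>!y. y \<in> Pj A cl j \<and> (\<Sum>k\<in>{k. cl k = j}. bsel j $ k * ln (y $ k)) = C"
    if d1: "dim (Kj B cl j) = 1" for j C
  proof -
    have ad: "aff_dim (Pj A cl j) = 1" using hj(1)[of j] d1 by simp
    have col: "collinear (Pbar A cl j)"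
    proof -
      have "aff_dim (Pbar A cl j) \<le> aff_dim (affine hull (Pj A cl j))"
        by (rule aff_dim_subset[OF Pbar_aff[OF Pne]])
      then show ?thesis using ad by (simp add: collinear_aff_dim aff_dim_affine_hull)
    qed
    obtain p where p: "p \<in> Pj A cl j" using Pne[of j] by blast
    have ne': "Pbar A cl j \<noteq> {}" using subsetD[OF Pj_sub_Pbar p] by blast
    obtain y1 y2 where seg: "Pbar A cl j = closed_segment y1 y2"
      by (rule compact_convex_collinear_segment[OF ne' Pbar_compact Pbar_convex col])
    have ne12: "y1 \<noteq> y2"
    proof
      assume "y1 = y2"
      then have "Pbar A cl j = {y1}" using seg by simp
      then have "Pj A cl j \<subseteq> {y1}" using Pj_sub_Pbar[of A cl j] by simp
      then have "aff_dim (Pj A cl j) \<le> aff_dim {y1}" by (rule aff_dim_subset)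
      then show False using ad by simp
    qed
    have H: "\<forall>y1 y2 b. y1 \<noteq> y2 \<and> Pbar A cl j = closed_segment y1 y2 \<and> span {b} = Kj B cl j
                      \<longrightarrow> sign_cond cl j y1 y2 b"
      using hyp_iii d1 by blast
    have sc: "sign_cond cl j y1 y2 (bsel j)" using H ne12 seg bsel(2)[OF d1] by blast
    have "span {- bsel j} = span {bsel j}"
    proof
      have "- bsel j \<in> span {bsel j}" by (rule span_neg) (rule span_base, simp)
      then show "span {- bsel j} \<subseteq> span {bsel j}" by (intro span_minimal subspace_span) simp
      have "- (- bsel j) \<in> span {- bsel j}" by (rule span_neg) (rule span_base, simp)
      then show "span {bsel j} \<subseteq> span {- bsel j}" by (intro span_minimal subspace_span) simp
    qed
    then have sp2: "span {- bsel j} = Kj B cl j" using bsel(2)[OF d1] by simp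
    have sc': "sign_cond cl j y1 y2 (- bsel j)" using H ne12 seg sp2 by blast
    show ?thesis by (rule core[OF seg ne12 Pne bselK[OF d1] sc sc'])
  qed
  have single: "\<exists>a. Pj A cl j = {a}" if "dim (Kj B cl j) \<noteq> 1" for j
  proof -
    have d0: "dim (Kj B cl j) = 0" using dimle[of j] that by linarith
    have "aff_dim (Pj A cl j) = 0" using hj(1)[of j, unfolded d0] by simp
    then show ?thesis by (simp add: aff_dim_eq_0)
  qed
  have polyP: "restr cl j y \<in> Pj A cl j" if "y \<in> coeff_polytope A cl" for y j
    using that unfolding coeff_polytope_def by blast
  have polypos: "\<forall>i. 0 < y $ i" if yP: "y \<in> coeff_polytope A cl" for y
  proof
    fix i
    have "restr cl (cl i) y \<in> Pj A cl (cl i)" by (rule polyP[OF yP])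
    then have "0 < restr cl (cl i) y $ i" unfolding Pj_def by blast
    then show "0 < y $ i" by (simp add: restr_def)
  qed
  have solj: "restr cl j y \<in> Pj A cl j \<and> (\<Sum>k\<in>{k. cl k = j}. bsel j $ k * ln (restr cl j y $ k)) = L c (bsel j)"
    if y: "y \<in> Ysol A B cl c" and d1: "dim (Kj B cl j) = 1" for y j
  proof -
    have yP: "y \<in> coeff_polytope A cl" and ym: "\<forall>z\<in>Dsp B cl. monom y z = monom c z"
      using y unfolding Ysol_def by blast+
    have "bsel j \<in> Dsp B cl" by (rule subsetD[OF KD bselK[OF d1]])
    then have "monom y (bsel j) = monom c (bsel j)" using ym by blast
    then have "L y (bsel j) = L c (bsel j)" using monom_iff[OF polypos[OF yP]] by simp
    moreover have "L y (bsel j) = (\<Sum>k\<in>{k. cl k = j}. bsel j $ k * ln (restr cl j y $ k))"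
      unfolding Lblock[OF bselB[OF d1]] by (rule blockagree) (simp add: restr_def)
    ultimately show ?thesis using polyP[OF yP] by simp
  qed
  have uniq: "y = y'" if y: "y \<in> Ysol A B cl c" and y': "y' \<in> Ysol A B cl c" for y y'
  proof -
    have yP: "y \<in> coeff_polytope A cl" and y'P: "y' \<in> coeff_polytope A cl"
      using y y' unfolding Ysol_def by blast+
    have eqj: "restr cl j y = restr cl j y'" for j
    proof (cases "dim (Kj B cl j) = 1")
      case True
      have P1: "restr cl j y \<in> Pj A cl j \<and> (\<Sum>k\<in>{k. cl k = j}. bsel j $ k * ln (restr cl j y $ k)) = L c (bsel j)"
        by (rule solj[OF y True])
      have P2: "restr cl j y' \<in> Pj A cl j \<and> (\<Sum>k\<in>{k. cl k = j}. bsel j $ k * ln (restr cl j y' $ k)) = L c (bsel j)"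
        by (rule solj[OF y' True])
      show ?thesis using uniqj[OF True, of "L c (bsel j)"] P1 P2 unfolding Ex1_def by blast
    next
      case False
      obtain a where a: "Pj A cl j = {a}" using single[OF False] by blast
      show ?thesis using polyP[OF yP, of j] polyP[OF y'P, of j] a by simp
    qed
    show ?thesis
    proof (unfold vec_eq_iff, intro allI)
      fix i
      have "y $ i = restr cl (cl i) y $ i" by (simp add: restr_def)
      also have "\<dots> = restr cl (cl i) y' $ i" by (simp only: eqj)
      also have "\<dots> = y' $ i" by (simp add: restr_def)
      finally show "y $ i = y' $ i" .
    qed
  qed
  define ysel where "ysel = (\<lambda>j. SOME w. w \<in> Pj A cl j \<and> (dim (Kj B cl j) = 1 \<longrightarrow>
      (\<Sum>k\<in>{k. cl k = j}. bsel j $ k * ln (w $ k)) = L c (bsel j)))"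
  have ysel: "ysel j \<in> Pj A cl j \<and> (dim (Kj B cl j) = 1 \<longrightarrow>
      (\<Sum>k\<in>{k. cl k = j}. bsel j $ k * ln (ysel j $ k)) = L c (bsel j))" for j
    unfolding ysel_def
  proof (rule someI_ex)
    show "\<exists>w. w \<in> Pj A cl j \<and> (dim (Kj B cl j) = 1 \<longrightarrow>
      (\<Sum>k\<in>{k. cl k = j}. bsel j $ k * ln (w $ k)) = L c (bsel j))"
    proof (cases "dim (Kj B cl j) = 1")
      case True
      then show ?thesis using uniqj[OF True, of "L c (bsel j)"] by blast
    next
      case False
      obtain w where "w \<in> Pj A cl j" using Pne[of j] by blast
      then show ?thesis using False by blast
    qed
  qed
  define y0 where "y0 = (\<chi> i. ysel (cl i) $ i)"
  have rj: "restr cl j y0 = ysel j" for j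
  proof (unfold vec_eq_iff, intro allI)
    fix i
    have z: "\<forall>i. cl i \<noteq> j \<longrightarrow> ysel j $ i = 0" using ysel[of j] unfolding Pj_def blockvecs_def by blast
    show "restr cl j y0 $ i = ysel j $ i"
      using z by (cases "cl i = j") (simp_all add: restr_def y0_def)
  qed
  have y0P: "y0 \<in> coeff_polytope A cl" unfolding coeff_polytope_def using rj ysel by simp
  have y0pos: "\<forall>i. 0 < y0 $ i" by (rule polypos[OF y0P])
  define J1 where "J1 = {j. dim (Kj B cl j) = 1}"
  have bJ: "bsel j \<in> blockvecs cl j" "bsel j \<noteq> 0" if "j \<in> J1" for j
    using that bselB bsel(1) unfolding J1_def by auto
  have indep: "independent (bsel ` J1)" and inj: "inj_on bsel J1"
    using indep_blocks[of J1 bsel cl, OF bJ(1) bJ(2)] by auto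
  have sub: "bsel ` J1 \<subseteq> Dsp B cl"
  proof
    fix x assume "x \<in> bsel ` J1"
    then obtain j where j: "j \<in> J1" "x = bsel j" by blast
    have "dim (Kj B cl j) = 1" using j(1) unfolding J1_def by simp
    then show "x \<in> Dsp B cl" using subsetD[OF KD bselK] j(2) by blast
  qed
  have dimD: "dim (Dsp B cl) = card J1"
  proof -
    have "(\<Sum>j\<in>UNIV. dim (Kj B cl j)) = (\<Sum>j\<in>UNIV. if j \<in> J1 then 1 else 0)"
    proof (rule sum.cong[OF refl])
      fix j
      show "dim (Kj B cl j) = (if j \<in> J1 then 1 else 0)"
      proof (cases "dim (Kj B cl j) = 1")
        case True then show ?thesis unfolding J1_def by simp
      next
        case False
        then have d0: "dim (Kj B cl j) = 0" using dimle[of j] by linarith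
        have "j \<notin> J1" using False unfolding J1_def by simp
        then show ?thesis by (simp only: d0 if_False)
      qed
    qed
    also have "\<dots> = card J1" by (simp add: sum.If_cases)
    finally show ?thesis using hyp_ii by simp
  qed
  have Dspan: "Dsp B cl \<subseteq> span (bsel ` J1)"
    by (rule card_ge_dim_independent[OF sub indep]) (simp add: dimD card_image[OF inj])
  define a where "a = (\<lambda>i. ln (y0 $ i) - ln (c $ i))"
  have Ldiff: "L y0 z = L c z \<longleftrightarrow> (\<Sum>i\<in>UNIV. z $ i * a i) = 0" for z
  proof -
    have "L y0 z - L c z = (\<Sum>i\<in>UNIV. z $ i * a i)"
      by (simp add: L_def a_def sum_subtractf[symmetric] right_diff_distrib)
    then show ?thesis by linarith
  qed
  have W: "subspace {z. L y0 z = L c z}"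
  proof -
    have "0 \<in> {z. L y0 z = L c z}" by (simp add: Ldiff)
    moreover have "x + y \<in> {z. L y0 z = L c z}" if "x \<in> {z. L y0 z = L c z}" "y \<in> {z. L y0 z = L c z}" for x y
      using that by (simp add: Ldiff distrib_right sum.distrib)
    moreover have "r *\<^sub>R x \<in> {z. L y0 z = L c z}" if "x \<in> {z. L y0 z = L c z}" for r x
    proof -
      have "(\<Sum>i\<in>UNIV. (r *\<^sub>R x) $ i * a i) = r * (\<Sum>i\<in>UNIV. x $ i * a i)"
        by (simp add: sum_distrib_left mult.assoc)
      then show ?thesis using that by (simp add: Ldiff)
    qed
    ultimately show ?thesis unfolding subspace_def by blast
  qed
  have inW: "bsel ` J1 \<subseteq> {z. L y0 z = L c z}"
  proof
    fix x assume "x \<in> bsel ` J1"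
    then obtain j where j: "j \<in> J1" "x = bsel j" by blast
    have d1: "dim (Kj B cl j) = 1" using j(1) unfolding J1_def by simp
    have "L y0 (bsel j) = (\<Sum>k\<in>{k. cl k = j}. bsel j $ k * ln (y0 $ k))" by (rule Lblock[OF bselB[OF d1]])
    also have "\<dots> = (\<Sum>k\<in>{k. cl k = j}. bsel j $ k * ln (ysel j $ k))"
      by (rule blockagree) (simp add: y0_def)
    also have "\<dots> = L c (bsel j)" using ysel[of j] d1 by simp
    finally show "x \<in> {z. L y0 z = L c z}" using j(2) by simp
  qed
  have DW: "Dsp B cl \<subseteq> {z. L y0 z = L c z}"
    using Dspan span_minimal[OF inW W] by (rule subset_trans)
  have y0sol: "y0 \<in> Ysol A B cl c"
    unfolding Ysol_def
  proof (intro CollectI conjI ballI)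
    show "y0 \<in> coeff_polytope A cl" by (rule y0P)
    fix z assume "z \<in> Dsp B cl"
    then have "L y0 z = L c z" using DW by blast
    then show "monom y0 z = monom c z" using monom_iff[OF y0pos] by simp
  qed
  have "Ysol A B cl c = {y0}" using y0sol uniq by blast
  then show "card (Ysol A B cl c) = 1" by simp
qed


end
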